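(* There is an absolute constant $c>0$ such that the following holds. Let $\epsilon\in(0,1)$ and let $A\in\mathbb{R}^{n\times n}$ be symmetric PSD with $\max_{i,j}|A_{ij}|\le1$ and largest eigenvalue $\lambda_1$. Include each index $i\in[n]$ independently with probability $p=\min(1,\frac{c}{\epsilon n})$ and let $T$ be the set of included indices. Then with probability at least $2/3$, either $\lambda_1 < \epsilon n$, or there exists $x \in \mathrm{span}\{e_i : i\in T\}$ with $x^TAx>0$ and $$\frac{x^TA^2x}{x^TAx}\ge \lambda_1-\epsilon n.$$ *)

theory Defs
  imports Complex_Main
begin

text \<open>Real n x n matrices are represented as functions nat => nat => real,
  only the entries with indices < n being relevant; vectors in R^n as nat => real.\<close>

definition mat_vec :: "nat \<Rightarrow> (nat \<Rightarrow> nat \<Rightarrow> real) \<Rightarrow> (nat \<Rightarrow> real) \<Rightarrow> nat \<Rightarrow> real" where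
  "mat_vec n A x i = (\<Sum>j<n. A i j * x j)"

definition mat_mul :: "nat \<Rightarrow> (nat \<Rightarrow> nat \<Rightarrow> real) \<Rightarrow> (nat \<Rightarrow> nat \<Rightarrow> real) \<Rightarrow> nat \<Rightarrow> nat \<Rightarrow> real" where
  "mat_mul n A B i j = (\<Sum>k<n. A i k * B k j)"

definition quad_form :: "nat \<Rightarrow> (nat \<Rightarrow> nat \<Rightarrow> real) \<Rightarrow> (nat \<Rightarrow> real) \<Rightarrow> real" where
  "quad_form n A x = (\<Sum>i<n. x i * mat_vec n A x i)"

definition symmetric_mat :: "nat \<Rightarrow> (nat \<Rightarrow> nat \<Rightarrow> real) \<Rightarrow> bool" where
  "symmetric_mat n A \<longleftrightarrow> (\<forall>i<n. \<forall>j<n. A i j = A j i)"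

definition psd_mat :: "nat \<Rightarrow> (nat \<Rightarrow> nat \<Rightarrow> real) \<Rightarrow> bool" where
  "psd_mat n A \<longleftrightarrow> symmetric_mat n A \<and> (\<forall>x. quad_form n A x \<ge> 0)"

definition is_eigenvalue :: "nat \<Rightarrow> (nat \<Rightarrow> nat \<Rightarrow> real) \<Rightarrow> real \<Rightarrow> bool" where
  "is_eigenvalue n A l \<longleftrightarrow> (\<exists>v. (\<exists>i<n. v i \<noteq> 0) \<and> (\<forall>i<n. mat_vec n A v i = l * v i))"

definition lambda_max :: "nat \<Rightarrow> (nat \<Rightarrow> nat \<Rightarrow> real) \<Rightarrow> real" where
  "lambda_max n A = Max {l. is_eigenvalue n A l}"

text \<open>Probability of an event about the random set T \<subseteq> {0..<n}, where each index is
  included independently with probability p.\<close>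
definition subset_prob :: "nat \<Rightarrow> real \<Rightarrow> (nat set \<Rightarrow> bool) \<Rightarrow> real" where
  "subset_prob n p E = (\<Sum>T\<in>{T. T \<subseteq> {..<n} \<and> E T}. p ^ card T * (1 - p) ^ (n - card T))"

end

theory Submission
  imports Defs "Jordan_Normal_Form.Char_Poly"
begin


definition wt :: "nat \<Rightarrow> real \<Rightarrow> nat set \<Rightarrow> real" where
  "wt n p T = p ^ card T * (1 - p) ^ (n - card T)"

lemma wt_prod: "T \<subseteq> {..<n} \<Longrightarrow> wt n p T = (\<Prod>i\<in>T. p) * (\<Prod>i\<in>{..<n}-T. (1-p))"
proof -
  assume T: "T \<subseteq> {..<n}"
  have f: "finite T" using T finite_subset by blast
  have "card ({..<n}-T) = n - card T" using T f by (simp add: card_Diff_subset)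
  then show ?thesis unfolding wt_def by simp
qed

lemma E_prod:
  "(\<Sum>T\<in>Pow {..<n}. wt n p T * (\<Prod>i<n. h i (i \<in> T))) = (\<Prod>i<n. p * h i True + (1-p) * h i False)"
proof -
  have "(\<Prod>i<n. p * h i True + (1-p) * h i False) =
     (\<Sum>X\<in>Pow {..<n}. (\<Prod>x\<in>X. p * h x True) * (\<Prod>x\<in>{..<n}-X. (1-p) * h x False))"
    by (rule prod_add) simp
  also have "\<dots> = (\<Sum>T\<in>Pow {..<n}. wt n p T * (\<Prod>i<n. h i (i \<in> T)))"
  proof (rule sum.cong)
    fix T assume "T \<in> Pow {..<n}"
    hence T: "T \<subseteq> {..<n}" by auto
    have f: "finite T" using T finite_subset by blast
    have split: "(\<Prod>i<n. h i (i \<in> T)) = (\<Prod>i\<in>T. h i (i \<in> T)) * (\<Prod>i\<in>{..<n}-T. h i (i \<in> T))"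
      by (metis prod.subset_diff[OF T] finite_lessThan mult.commute)
    have a: "(\<Prod>i\<in>T. h i (i \<in> T)) = (\<Prod>i\<in>T. h i True)" by (rule prod.cong) auto
    have b: "(\<Prod>i\<in>{..<n}-T. h i (i \<in> T)) = (\<Prod>i\<in>{..<n}-T. h i False)" by (rule prod.cong) auto
    show "(\<Prod>x\<in>T. p * h x True) * (\<Prod>x\<in>{..<n}-T. (1-p) * h x False) = wt n p T * (\<Prod>i<n. h i (i \<in> T))"
      unfolding wt_prod[OF T] split a b prod.distrib by (simp add: algebra_simps)
  qed simp
  finally show ?thesis by simp
qed

definition ind :: "nat set \<Rightarrow> nat \<Rightarrow> real" where
  "ind T i = (if i \<in> T then 1 else 0)"


lemma wt_sum1: "(\<Sum>T\<in>Pow {..<n}. wt n p T) = 1"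
  using E_prod[of n p "\<lambda>i b. 1"] by simp

lemma E_cov:
  assumes "i < n" "j < n"
  shows "(\<Sum>T\<in>Pow {..<n}. wt n p T * ((ind T i - p) * (ind T j - p))) = (if i = j then p * (1-p) else 0)"
proof -
  define h where "h = (\<lambda>k b. (if k = i then (if b then 1 else 0) - p else 1) * (if k = j then (if b then 1 else 0) - p else (1::real)))"
  have 1: "(\<Prod>k<n. h k (k \<in> T)) = (ind T i - p) * (ind T j - p)" for T
    unfolding h_def prod.distrib using assms by (simp add: prod.delta ind_def)
  have "(\<Sum>T\<in>Pow {..<n}. wt n p T * ((ind T i - p) * (ind T j - p))) = (\<Prod>k<n. p * h k True + (1-p) * h k False)"
    using E_prod[of n p h] unfolding 1 .
  also have "\<dots> = (if i = j then p * (1-p) else 0)"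
  proof (cases "i = j")
    case True
    have "(\<Prod>k<n. p * h k True + (1-p) * h k False) = (\<Prod>k<n. if k = i then p*(1-p) else 1)"
      by (rule prod.cong) (auto simp: h_def True algebra_simps power2_eq_square)
    then show ?thesis using True assms by (simp add: prod.delta)
  next
    case False
    have "\<exists>k\<in>{..<n}. p * h k True + (1-p) * h k False = 0"
      using assms False by (intro bexI[of _ i]) (auto simp: h_def algebra_simps)
    then show ?thesis using False by (simp add: prod_zero_iff)
  qed
  finally show ?thesis .
qed

lemma E_quad:
  "(\<Sum>T\<in>Pow {..<n}. wt n p T * (\<Sum>i<n. \<Sum>j<n. (ind T i - p) * (ind T j - p) * M i j)) = p * (1-p) * (\<Sum>i<n. M i i)"
proof -
  have "(\<Sum>T\<in>Pow {..<n}. wt n p T * (\<Sum>i<n. \<Sum>j<n. (ind T i - p) * (ind T j - p) * M i j))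
     = (\<Sum>i<n. \<Sum>j<n. (\<Sum>T\<in>Pow {..<n}. wt n p T * ((ind T i - p) * (ind T j - p))) * M i j)"
    by (simp add: sum_distrib_left sum_distrib_right sum.swap[of _ "Pow {..<n}"] mult.assoc)
  also have "\<dots> = (\<Sum>i<n. \<Sum>j<n. (if i = j then p * (1-p) else 0) * M i j)"
    by (simp add: E_cov)
  also have "\<dots> = (\<Sum>i<n. p * (1-p) * M i i)"
  proof (rule sum.cong)
    fix i assume i: "i \<in> {..<n}"
    have "(\<Sum>j<n. (if i = j then p * (1-p) else 0) * M i j) = (\<Sum>j<n. if i = j then p * (1-p) * M i j else 0)"
      by (rule sum.cong) auto
    also have "\<dots> = p * (1-p) * M i i" using i by (simp add: sum.delta)
    finally show "(\<Sum>j<n. (if i = j then p * (1-p) else 0) * M i j) = p * (1-p) * M i i" .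
  qed simp
  also have "\<dots> = p * (1-p) * (\<Sum>i<n. M i i)" by (simp add: sum_distrib_left)
  finally show ?thesis .
qed

lemma subset_prob_Pow: "subset_prob n p E = (\<Sum>T\<in>Pow {..<n}. if E T then wt n p T else 0)"
proof -
  have "{T. T \<subseteq> {..<n} \<and> E T} = {T \<in> Pow {..<n}. E T}" by auto
  then show ?thesis unfolding subset_prob_def wt_def[symmetric]
    by (simp add: sum.inter_filter[symmetric])
qed

lemma markov:
  assumes p: "0 \<le> p" "p \<le> 1" and t: "t > 0"
    and Z0: "\<And>T. T \<subseteq> {..<n} \<Longrightarrow> Z T \<ge> 0"
    and ZE: "\<And>T. T \<subseteq> {..<n} \<Longrightarrow> Z T \<le> t \<Longrightarrow> E T"
  shows "subset_prob n p E \<ge> 1 - (\<Sum>T\<in>Pow {..<n}. wt n p T * Z T) / t"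
proof -
  have w0: "wt n p T \<ge> 0" for T unfolding wt_def using p by simp
  have "1 - (\<Sum>T\<in>Pow {..<n}. wt n p T * Z T) / t = (\<Sum>T\<in>Pow {..<n}. wt n p T * (1 - Z T / t))"
    using wt_sum1[of n p] t by (simp add: algebra_simps sum_subtractf sum_divide_distrib)
  also have "\<dots> \<le> (\<Sum>T\<in>Pow {..<n}. if E T then wt n p T else 0)"
  proof (rule sum_mono)
    fix T assume "T \<in> Pow {..<n}"
    hence T: "T \<subseteq> {..<n}" by auto
    show "wt n p T * (1 - Z T / t) \<le> (if E T then wt n p T else 0)"
    proof (cases "E T")
      case True
      have "Z T / t \<ge> 0" using Z0[OF T] t by simp
      then show ?thesis using True w0[of T] by (simp add: mult_left_le)
    next
      case False
      then have "Z T > t" using ZE[OF T] by force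
      then have "1 - Z T / t \<le> 0" using t by simp
      then show ?thesis using False w0[of T] by (simp add: mult_nonneg_nonpos)
    qed
  qed
  finally show ?thesis unfolding subset_prob_Pow by simp
qed



definition cmat :: "nat \<Rightarrow> (nat \<Rightarrow> nat \<Rightarrow> real) \<Rightarrow> complex mat" where
  "cmat n A = mat n n (\<lambda>(i,j). complex_of_real (A i j))"

lemma cmat_carrier: "cmat n A \<in> carrier_mat n n" unfolding cmat_def by simp

lemma cmat_mult: "i < n \<Longrightarrow> dim_vec w = n \<Longrightarrow> (cmat n A *\<^sub>v w) $ i = (\<Sum>j<n. complex_of_real (A i j) * w $ j)"
  unfolding cmat_def by (simp add: scalar_prod_def lessThan_atLeast0)

lemma is_eig_to: assumes "is_eigenvalue n A l" shows "eigenvalue (cmat n A) (complex_of_real l)"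
proof -
  from assms obtain v where v: "\<exists>i<n. v i \<noteq> 0" "\<forall>i<n. mat_vec n A v i = l * v i"
    unfolding is_eigenvalue_def by blast
  define w where "w = vec n (\<lambda>i. complex_of_real (v i))"
  have "eigenvector (cmat n A) w (complex_of_real l)"
    unfolding eigenvector_def
  proof (intro conjI)
    show "w \<in> carrier_vec (dim_row (cmat n A))" unfolding w_def cmat_def by simp
    show "w \<noteq> 0\<^sub>v (dim_row (cmat n A))" using v(1) unfolding w_def cmat_def
      by (auto simp: vec_eq_iff)
    show "cmat n A *\<^sub>v w = complex_of_real l \<cdot>\<^sub>v w"
    proof (rule eq_vecI)
      fix i assume "i < dim_vec (complex_of_real l \<cdot>\<^sub>v w)"
      hence i: "i < n" unfolding w_def by simp
      have "(cmat n A *\<^sub>v w) $ i = (\<Sum>j<n. complex_of_real (A i j) * complex_of_real (v j))"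
        using i by (simp add: cmat_mult w_def)
      also have "\<dots> = complex_of_real (mat_vec n A v i)" unfolding mat_vec_def by simp
      also have "\<dots> = (complex_of_real l \<cdot>\<^sub>v w) $ i" using v(2) i by (simp add: w_def)
      finally show "(cmat n A *\<^sub>v w) $ i = (complex_of_real l \<cdot>\<^sub>v w) $ i" .
    qed (simp add: cmat_def w_def)
  qed
  then show ?thesis unfolding eigenvalue_def by blast
qed

lemma eig_finite: "finite {l. is_eigenvalue n A l}"
proof -
  let ?p = "char_poly (cmat n A)"
  have "?p \<noteq> 0" using degree_monic_char_poly[OF cmat_carrier, of n A] by auto
  then have f: "finite {z. poly ?p z = 0}" by (rule poly_roots_finite)
  have "{l. is_eigenvalue n A l} \<subseteq> complex_of_real -` {z. poly ?p z = 0}"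
    using is_eig_to eigenvalue_root_char_poly[OF cmat_carrier] by auto
  moreover have "finite (complex_of_real -` {z. poly ?p z = 0})"
    by (rule finite_vimageI[OF f]) (simp add: inj_on_def)
  ultimately show ?thesis by (rule finite_subset)
qed

lemma eig_exists:
  assumes n: "n \<ge> 1" and sym: "symmetric_mat n A"
  shows "\<exists>l. is_eigenvalue n A l"
proof -
  let ?B = "cmat n A"
  obtain as where as: "char_poly ?B = (\<Prod>a\<leftarrow>as. [:- a, 1:])" "length as = n"
    using char_poly_factorized[OF cmat_carrier] by blast
  then obtain a rest where "as = a # rest" using n by (cases as) auto
  then have "poly (char_poly ?B) a = 0" using as(1) by simp
  then have "eigenvalue ?B a" using eigenvalue_root_char_poly[OF cmat_carrier] by blast
  then obtain w where w: "w \<in> carrier_vec n" "w \<noteq> 0\<^sub>v n" "?B *\<^sub>v w = a \<cdot>\<^sub>v w"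
    unfolding eigenvalue_def eigenvector_def cmat_def by auto
  define u where "u = (\<lambda>i. Re (w $ i))"
  define z where "z = (\<lambda>i. Im (w $ i))"
  define \<alpha> where "\<alpha> = Re a"
  define \<beta> where "\<beta> = Im a"
  have eq: "(\<Sum>j<n. complex_of_real (A i j) * w $ j) = a * w $ i" if i: "i < n" for i
  proof -
    have "(?B *\<^sub>v w) $ i = (a \<cdot>\<^sub>v w) $ i" using w(3) by simp
    then show ?thesis using i w(1) by (simp add: cmat_mult)
  qed
  have Au: "mat_vec n A u i = \<alpha> * u i - \<beta> * z i" if i: "i < n" for i
  proof -
    have "Re (\<Sum>j<n. complex_of_real (A i j) * w $ j) = Re (a * w $ i)" using eq[OF i] by simp
    then show ?thesis unfolding mat_vec_def u_def z_def \<alpha>_def \<beta>_def by (simp add: Re_sum)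
  qed
  have Az: "mat_vec n A z i = \<beta> * u i + \<alpha> * z i" if i: "i < n" for i
  proof -
    have "Im (\<Sum>j<n. complex_of_real (A i j) * w $ j) = Im (a * w $ i)" using eq[OF i] by simp
    then show ?thesis unfolding mat_vec_def u_def z_def \<alpha>_def \<beta>_def by (simp add: Im_sum)
  qed
  have swap: "(\<Sum>i<n. u i * mat_vec n A z i) = (\<Sum>i<n. z i * mat_vec n A u i)"
  proof -
    have "(\<Sum>i<n. u i * mat_vec n A z i) = (\<Sum>i<n. \<Sum>j<n. u i * A i j * z j)"
      unfolding mat_vec_def by (simp add: sum_distrib_left mult.assoc)
    also have "\<dots> = (\<Sum>j<n. \<Sum>i<n. u i * A i j * z j)" by (rule sum.swap)
    also have "\<dots> = (\<Sum>j<n. z j * mat_vec n A u j)"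
      unfolding mat_vec_def using sym unfolding symmetric_mat_def
      by (auto simp: sum_distrib_left intro!: sum.cong)
    finally show ?thesis .
  qed
  have "(\<Sum>i<n. u i * mat_vec n A z i) = (\<Sum>i<n. \<beta> * u i ^ 2 + \<alpha> * (u i * z i))"
    by (rule sum.cong) (auto simp: Az power2_eq_square algebra_simps)
  moreover have "(\<Sum>i<n. z i * mat_vec n A u i) = (\<Sum>i<n. \<alpha> * (u i * z i) - \<beta> * z i ^ 2)"
    by (rule sum.cong) (auto simp: Au power2_eq_square algebra_simps)
  ultimately have bz: "\<beta> * (\<Sum>i<n. u i ^ 2 + z i ^ 2) = 0"
    using swap by (simp add: sum.distrib sum_subtractf sum_distrib_left algebra_simps)
  obtain k where k: "k < n" "w $ k \<noteq> 0" using w(1,2) by (auto simp: vec_eq_iff)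
  have "u k ^ 2 + z k ^ 2 > 0" using k unfolding u_def z_def
    by (simp add: complex_eq_iff add_pos_nonneg sum_power2_gt_zero_iff)
  then have "(\<Sum>i<n. u i ^ 2 + z i ^ 2) > 0"
    using k by (metis (no_types, lifting) add_nonneg_nonneg finite_lessThan lessThan_iff order_less_le sum_pos2 zero_le_power2)
  with bz have b0: "\<beta> = 0" by simp
  show ?thesis
  proof (cases "u k = 0")
    case False
    have "is_eigenvalue n A \<alpha>" unfolding is_eigenvalue_def
      using Au b0 k False by (intro exI[of _ u]) auto
    then show ?thesis by blast
  next
    case True
    then have "z k \<noteq> 0" using k unfolding u_def z_def by (simp add: complex_eq_iff)
    have "is_eigenvalue n A \<alpha>" unfolding is_eigenvalue_def
      using Az b0 k \<open>z k \<noteq> 0\<close> by (intro exI[of _ z]) auto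
    then show ?thesis by blast
  qed
qed

lemma lambda_max_eig:
  assumes "n \<ge> 1" "symmetric_mat n A"
  shows "is_eigenvalue n A (lambda_max n A)"
proof -
  have "{l. is_eigenvalue n A l} \<noteq> {}" using eig_exists[OF assms] by auto
  then have "lambda_max n A \<in> {l. is_eigenvalue n A l}"
    unfolding lambda_max_def using eig_finite by (rule Max_in[rotated])
  then show ?thesis by simp
qed



definition bil :: "nat \<Rightarrow> (nat \<Rightarrow> nat \<Rightarrow> real) \<Rightarrow> (nat \<Rightarrow> real) \<Rightarrow> (nat \<Rightarrow> real) \<Rightarrow> real" where
  "bil n A x y = (\<Sum>i<n. x i * mat_vec n A y i)"

lemma quad_bil: "quad_form n A x = bil n A x x" unfolding quad_form_def bil_def ..

lemma bil_expand: "bil n A x y = (\<Sum>i<n. \<Sum>j<n. x i * A i j * y j)"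
  unfolding bil_def mat_vec_def by (simp add: sum_distrib_left mult.assoc)

lemma bil_sym: assumes "symmetric_mat n A" shows "bil n A x y = bil n A y x"
proof -
  have "bil n A x y = (\<Sum>j<n. \<Sum>i<n. x i * A i j * y j)" unfolding bil_expand by (rule sum.swap)
  also have "\<dots> = bil n A y x" unfolding bil_expand using assms unfolding symmetric_mat_def
    by (auto intro!: sum.cong simp: mult.commute mult.left_commute)
  finally show ?thesis .
qed

lemma quad_add: assumes "symmetric_mat n A"
  shows "quad_form n A (\<lambda>i. x i + y i) = quad_form n A x + 2 * bil n A x y + quad_form n A y"
proof -
  have "quad_form n A (\<lambda>i. x i + y i) = bil n A x x + bil n A x y + bil n A y x + bil n A y y"
    unfolding quad_bil bil_expand by (simp add: algebra_simps sum.distrib)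
  then show ?thesis using bil_sym[OF assms, of y x] by (simp add: quad_bil)
qed

lemma quad_scale: "quad_form n A (\<lambda>i. c * x i) = c^2 * quad_form n A x"
  unfolding quad_bil bil_expand by (simp add: sum_distrib_left power2_eq_square algebra_simps)

lemma bil_eig: assumes "\<forall>i<n. mat_vec n A v i = l * v i"
  shows "bil n A y v = l * (\<Sum>i<n. y i * v i)"
  unfolding bil_def using assms by (simp add: sum_distrib_left algebra_simps)

lemma quad_mul: assumes "symmetric_mat n A"
  shows "quad_form n (mat_mul n A A) x = (\<Sum>k<n. (mat_vec n A x k)^2)"
proof -
  have "(\<Sum>k<n. (mat_vec n A x k)^2) = (\<Sum>k<n. \<Sum>i<n. \<Sum>j<n. (A k i * x i) * (A k j * x j))"
    unfolding mat_vec_def power2_eq_square sum_product ..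
  also have "\<dots> = (\<Sum>i<n. \<Sum>k<n. \<Sum>j<n. (A k i * x i) * (A k j * x j))"
    by (rule sum.swap)
  also have "\<dots> = (\<Sum>i<n. x i * (\<Sum>j<n. (\<Sum>k<n. A i k * A k j) * x j))"
  proof (rule sum.cong[OF refl])
    fix i assume i: "i \<in> {..<n}"
    have "(\<Sum>k<n. \<Sum>j<n. (A k i * x i) * (A k j * x j)) = (\<Sum>j<n. \<Sum>k<n. (A k i * x i) * (A k j * x j))"
      by (rule sum.swap)
    also have "\<dots> = (\<Sum>j<n. \<Sum>k<n. x i * (A i k * A k j * x j))"
      using i assms unfolding symmetric_mat_def
      by (intro sum.cong refl) (simp add: mult.commute mult.left_commute)
    also have "\<dots> = x i * (\<Sum>j<n. (\<Sum>k<n. A i k * A k j) * x j)"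
      by (simp add: sum_distrib_left sum_distrib_right)
    finally show "(\<Sum>k<n. \<Sum>j<n. (A k i * x i) * (A k j * x j)) = x i * (\<Sum>j<n. (\<Sum>k<n. A i k * A k j) * x j)" .
  qed
  also have "\<dots> = quad_form n (mat_mul n A A) x"
    unfolding quad_form_def mat_vec_def mat_mul_def ..
  finally show ?thesis ..
qed

lemma psd_cs: assumes psd: "\<forall>x. quad_form n A x \<ge> 0" and sym: "symmetric_mat n A"
  and qy: "quad_form n A y > 0"
  shows "(bil n A x y)^2 \<le> quad_form n A x * quad_form n A y"
proof -
  define t where "t = - bil n A x y / quad_form n A y"
  have "0 \<le> quad_form n A (\<lambda>i. x i + t * y i)" using psd by blast
  also have "\<dots> = quad_form n A x + 2 * t * bil n A x y + t^2 * quad_form n A y"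
  proof -
    have "bil n A x (\<lambda>i. t * y i) = t * bil n A x y"
      unfolding bil_expand by (simp add: sum_distrib_left algebra_simps)
    then show ?thesis using quad_add[OF sym, of x "\<lambda>i. t * y i"] quad_scale[of n A t y] by simp
  qed
  also have "\<dots> = quad_form n A x - (bil n A x y)^2 / quad_form n A y"
    using qy unfolding t_def by (simp add: field_simps power2_eq_square)
  finally show ?thesis using qy by (simp add: field_simps)
qed

lemma cs_unit: assumes "(\<Sum>i<n. a i ^ 2) = (1::real)"
  shows "(\<Sum>i<n. a i * b i)^2 \<le> (\<Sum>i<n. b i ^ 2)"
proof -
  define s where "s = (\<Sum>i<n. a i * b i)"
  have "0 \<le> (\<Sum>i<n. (b i - s * a i)^2)" by (simp add: sum_nonneg)
  also have "\<dots> = (\<Sum>i<n. b i ^ 2 - 2 * s * (a i * b i) + s^2 * a i ^ 2)"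
    by (rule sum.cong) (auto simp: power2_eq_square algebra_simps)
  also have "\<dots> = (\<Sum>i<n. b i ^ 2) - 2 * s * s + s^2 * (\<Sum>i<n. a i ^ 2)"
    unfolding s_def by (simp add: sum.distrib sum_subtractf sum_distrib_left)
  finally show ?thesis using assms unfolding s_def by (simp add: power2_eq_square)
qed



lemma good_T:
  assumes sym: "symmetric_mat n A" and psd: "\<forall>x. quad_form n A x \<ge> 0"
    and v1: "(\<Sum>i<n. v i ^ 2) = 1" and eig: "\<forall>i<n. mat_vec n A v i = l * v i"
    and mu: "\<mu> > 0" "l \<ge> \<mu>" and p: "p > 0"
    and hyp: "\<mu> * ((\<Sum>i<n. ind T i * v i ^ 2) - p)^2 + quad_form n A (\<lambda>i. (ind T i - p) * v i) \<le> \<mu> * p^2 / 16"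
  shows "quad_form n A (\<lambda>i. ind T i * v i) > 0 \<and>
         quad_form n (mat_mul n A A) (\<lambda>i. ind T i * v i) / quad_form n A (\<lambda>i. ind T i * v i) \<ge> l - \<mu>"
proof -
  define S where "S = (\<Sum>i<n. ind T i * v i ^ 2)"
  define e where "e = (\<lambda>i. (ind T i - p) * v i)"
  define x where "x = (\<lambda>i. ind T i * v i)"
  define t where "t = S - p"
  define qe where "qe = quad_form n A e"
  have qe0: "qe \<ge> 0" using psd unfolding qe_def by blast
  have h: "\<mu> * t^2 + qe \<le> \<mu> * p^2 / 16" using hyp unfolding t_def qe_def S_def e_def .
  have "\<mu> * t^2 \<le> \<mu> * (p/4)^2" using h qe0 by (simp add: power2_eq_square)
  then have "t^2 \<le> (p/4)^2" using mu by simp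
  then have "\<bar>t\<bar> \<le> \<bar>p/4\<bar>" by (simp only: abs_le_square_iff)
  then have at: "\<bar>t\<bar> \<le> p/4" using p by simp
  have qeb: "qe \<le> \<mu> * p^2 / 16" proof -
    have "\<mu> * t^2 \<ge> 0" using mu by simp
    then show ?thesis using h by linarith
  qed
  have xe: "x = (\<lambda>i. p * v i + e i)" unfolding x_def e_def by (auto simp: algebra_simps)
  have qv: "quad_form n A v = l" unfolding quad_bil using bil_eig[OF eig, of v] v1
    by (simp add: power2_eq_square)
  have ev: "(\<Sum>i<n. e i * v i) = t"
  proof -
    have "(\<Sum>i<n. e i * v i) = (\<Sum>i<n. ind T i * v i ^ 2 - p * v i ^ 2)"
      unfolding e_def by (rule sum.cong) (auto simp: algebra_simps power2_eq_square)
    also have "\<dots> = S - p" unfolding S_def using v1 by (simp add: sum_subtractf sum_distrib_left[symmetric])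
    finally show ?thesis unfolding t_def .
  qed
  have bve: "bil n A (\<lambda>i. p * v i) e = p * l * t"
  proof -
    have "bil n A (\<lambda>i. p * v i) e = bil n A e (\<lambda>i. p * v i)" by (rule bil_sym[OF sym])
    also have "\<dots> = p * bil n A e v" unfolding bil_expand by (simp add: sum_distrib_left algebra_simps)
    also have "\<dots> = p * l * t" using bil_eig[OF eig, of e] ev by simp
    finally show ?thesis .
  qed
  have Q: "quad_form n A x = p^2 * l + 2 * p * l * t + qe"
    unfolding xe quad_add[OF sym] quad_scale qv bve qe_def by simp
  have xv: "(\<Sum>i<n. x i * v i) = S" unfolding x_def S_def by (simp add: power2_eq_square mult.assoc)
  have "(l * S)^2 = (bil n A x v)^2" using bil_eig[OF eig, of x] xv by simp
  also have "\<dots> = (bil n A v x)^2" using bil_sym[OF sym] by simp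
  also have "\<dots> = (\<Sum>i<n. v i * mat_vec n A x i)^2" unfolding bil_def ..
  also have "\<dots> \<le> (\<Sum>k<n. (mat_vec n A x k)^2)" by (rule cs_unit[OF v1])
  also have "\<dots> = quad_form n (mat_mul n A A) x" using quad_mul[OF sym] by simp
  finally have AA: "(l * S)^2 \<le> quad_form n (mat_mul n A A) x" .
  have l0: "l > 0" using mu by simp
  have tlow: "t \<ge> - p/4" using at by simp
  have m1: "p * l * t \<ge> p * l * (- p/4)" using tlow p l0 by (intro mult_left_mono) auto
  have Qpos: "quad_form n A x > 0"
  proof -
    have "p^2 * l + 2 * p * l * (-p/4) > 0" using p l0 by (simp add: power2_eq_square)
    then show ?thesis unfolding Q using m1 qe0 by linarith
  qed
  have m2: "\<mu> * l * p * t \<ge> \<mu> * l * p * (- p/4)" using tlow p l0 mu by (intro mult_left_mono) auto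
  have m3: "(l - \<mu>) * qe \<le> l * (\<mu> * p^2 / 16)" using qeb qe0 mu l0 by (intro mult_mono) auto
  have id: "(l * S)^2 - (l - \<mu>) * quad_form n A x = \<mu> * l * p^2 + 2 * (\<mu> * l * p * t) + l^2 * t^2 - (l - \<mu>) * qe"
  proof -
    have "S = t + p" unfolding t_def by simp
    then show ?thesis unfolding Q by (simp add: power2_eq_square algebra_simps)
  qed
  have pos: "\<mu> * l * p^2 * (1 - 1/2 - 1/16) \<ge> 0" using mu l0 by simp
  have "(l * S)^2 - (l - \<mu>) * quad_form n A x \<ge> 0"
  proof -
    have e1: "\<mu> * l * p * (- p/4) = - (\<mu> * l * p^2) / 4" by (simp add: power2_eq_square)
    have e2: "l * (\<mu> * p^2 / 16) = \<mu> * l * p^2 / 16" by simp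
    have e3: "\<mu> * l * p^2 \<ge> 0" using mu l0 by simp
    have e4: "l^2 * t^2 \<ge> 0" by simp
    show ?thesis unfolding id using m2 m3 e1 e2 e3 e4 by linarith
  qed
  then have "(l - \<mu>) * quad_form n A x \<le> quad_form n (mat_mul n A A) x" using AA by linarith
  then have "l - \<mu> \<le> quad_form n (mat_mul n A A) x / quad_form n A x" using Qpos by (simp add: pos_le_divide_eq)
  then show ?thesis using Qpos unfolding x_def by simp
qed



lemma sum_mult_delta: "i < (n::nat) \<Longrightarrow> (\<Sum>j<n. f j * (if j = i then 1 else 0)) = (f i :: real)"
proof -
  assume i: "i < n"
  have "(\<Sum>j<n. f j * (if j = i then 1 else 0)) = (\<Sum>j<n. if j = i then f j else 0)"
    by (rule sum.cong) auto
  also have "\<dots> = f i" using i by (subst sum.delta) auto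
  finally show ?thesis .
qed

lemma main_fixed:
  assumes n: "n \<ge> 1" and psdA: "psd_mat n A" and bnd: "\<forall>i<n. \<forall>j<n. \<bar>A i j\<bar> \<le> 1"
    and mu: "\<mu> > 0" and pdef: "p = min 1 (96 / \<mu>)"
  shows "subset_prob n p (\<lambda>T. lambda_max n A < \<mu> \<or>
     (\<exists>x::nat \<Rightarrow> real. (\<forall>i<n. i \<notin> T \<longrightarrow> x i = 0) \<and> quad_form n A x > 0 \<and>
        quad_form n (mat_mul n A A) x / quad_form n A x \<ge> lambda_max n A - \<mu>)) \<ge> 2/3"
    (is "subset_prob n p ?E \<ge> _")
proof -
  have sym: "symmetric_mat n A" and psd: "\<forall>x. quad_form n A x \<ge> 0" using psdA unfolding psd_mat_def by auto
  have p0: "p > 0" and p1: "p \<le> 1" using pdef mu by auto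
  show ?thesis
  proof (cases "lambda_max n A < \<mu>")
    case True
    have "subset_prob n p ?E \<ge> 1 - (\<Sum>T\<in>Pow {..<n}. wt n p T * 0) / 1"
      by (rule markov[where Z = "\<lambda>T. 0"]) (use p0 p1 True in auto)
    then show ?thesis by simp
  next
    case False
    define l where "l = lambda_max n A"
    have lmu: "l \<ge> \<mu>" using False unfolding l_def by simp
    have l0: "l > 0" using lmu mu by simp
    obtain v0 where v0: "\<exists>i<n. v0 i \<noteq> 0" "\<forall>i<n. mat_vec n A v0 i = l * v0 i"
      using lambda_max_eig[OF n sym] unfolding is_eigenvalue_def l_def by blast
    define N where "N = (\<Sum>i<n. v0 i ^ 2)"
    have N0: "N > 0" unfolding N_def using v0(1)
      by (metis (no_types, lifting) finite_lessThan lessThan_iff power_not_zero sum_pos2 zero_le_power2 zero_less_power2)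
    define v where "v = (\<lambda>i. v0 i / sqrt N)"
    have v1: "(\<Sum>i<n. v i ^ 2) = 1"
      unfolding v_def using N0 by (simp add: power_divide sum_divide_distrib[symmetric] N_def[symmetric])
    have eig: "\<forall>i<n. mat_vec n A v i = l * v i"
      using v0(2) unfolding v_def mat_vec_def by (simp add: sum_divide_distrib[symmetric])
    have qv: "quad_form n A v = l" unfolding quad_bil using bil_eig[OF eig, of v] v1
      by (simp add: power2_eq_square)
    have vb: "v i ^ 2 \<le> 1 / \<mu>" if i: "i < n" for i
    proof -
      define u where "u = (\<lambda>j. if j = i then 1 else (0::real))"
      have bu: "bil n A u v = l * v i"
      proof -
        have "bil n A u v = (\<Sum>j<n. if j = i then mat_vec n A v j else 0)"
          unfolding bil_def u_def by (rule sum.cong) auto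
        also have "\<dots> = l * v i" using i eig by (simp add: sum.delta)
        finally show ?thesis .
      qed
      have qu: "quad_form n A u = A i i"
      proof -
        have "quad_form n A u = (\<Sum>a<n. if a = i then (\<Sum>b<n. A a b * (if b = i then 1 else 0)) else 0)"
          unfolding quad_bil bil_expand u_def by (intro sum.cong refl) auto
        also have "\<dots> = A i i" using i by (simp add: sum.delta sum_mult_delta)
        finally show ?thesis .
      qed
      have "(l * v i)^2 \<le> A i i * l" using psd_cs[OF psd sym, of v u] qv l0 bu qu by simp
      also have "\<dots> \<le> 1 * l" using bnd i l0 by (intro mult_right_mono) (auto simp: abs_le_iff)
      finally have "l * (l * v i ^ 2) \<le> l * 1" by (simp add: power2_eq_square algebra_simps)
      then have "v i ^ 2 \<le> 1 / l" using l0 by (simp add: field_simps)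
      also have "1 / l \<le> 1 / \<mu>" using lmu mu by (simp add: frac_le)
      finally show ?thesis .
    qed
    define M where "M = (\<lambda>i j. \<mu> * v i ^ 2 * v j ^ 2 + v i * A i j * v j)"
    define Z where "Z = (\<lambda>T. \<Sum>i<n. \<Sum>j<n. (ind T i - p) * (ind T j - p) * M i j)"
    have Zeq: "Z T = \<mu> * ((\<Sum>i<n. ind T i * v i ^ 2) - p)^2 + quad_form n A (\<lambda>i. (ind T i - p) * v i)" for T
    proof -
      have s: "(\<Sum>i<n. ind T i * v i ^ 2) - p = (\<Sum>i<n. (ind T i - p) * v i ^ 2)"
        using v1 by (simp add: algebra_simps sum_subtractf sum_distrib_left[symmetric])
      have "Z T = \<mu> * (\<Sum>i<n. \<Sum>j<n. ((ind T i - p) * v i ^ 2) * ((ind T j - p) * v j ^ 2))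
           + (\<Sum>i<n. \<Sum>j<n. ((ind T i - p) * v i) * A i j * ((ind T j - p) * v j))"
      proof -
        have "Z T = (\<Sum>i<n. \<Sum>j<n. \<mu> * (((ind T i - p) * v i ^ 2) * ((ind T j - p) * v j ^ 2))
           + ((ind T i - p) * v i) * A i j * ((ind T j - p) * v j))"
          unfolding Z_def M_def by (intro sum.cong refl) (simp add: algebra_simps)
        then show ?thesis by (simp add: sum.distrib sum_distrib_left)
      qed
      also have "\<dots> = \<mu> * ((\<Sum>i<n. ind T i * v i ^ 2) - p)^2 + quad_form n A (\<lambda>i. (ind T i - p) * v i)"
        unfolding s quad_bil bil_expand by (simp add: power2_eq_square sum_product)
      finally show ?thesis .
    qed
    define t0 where "t0 = \<mu> * p^2 / 16"
    have t0: "t0 > 0" unfolding t0_def using mu p0 by simp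
    have "subset_prob n p ?E \<ge> 1 - (\<Sum>T\<in>Pow {..<n}. wt n p T * Z T) / t0"
    proof (rule markov[OF _ p1 t0])
      show "0 \<le> p" using p0 by simp
      fix T
      show "Z T \<ge> 0" unfolding Zeq using psd mu by (intro add_nonneg_nonneg) auto
      assume "Z T \<le> t0"
      then have h: "\<mu> * ((\<Sum>i<n. ind T i * v i ^ 2) - p)^2 + quad_form n A (\<lambda>i. (ind T i - p) * v i) \<le> \<mu> * p^2 / 16"
        unfolding Zeq t0_def .
      from good_T[OF sym psd v1 eig mu lmu p0 h]
      show "?E T" unfolding l_def[symmetric]
        by (intro disjI2 exI[of _ "\<lambda>i. ind T i * v i"]) (auto simp: ind_def)
    qed
    moreover have "(\<Sum>T\<in>Pow {..<n}. wt n p T * Z T) = p * (1-p) * (\<Sum>i<n. M i i)"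
      unfolding Z_def by (rule E_quad)
    moreover have "(\<Sum>i<n. M i i) \<le> 2"
    proof -
      have "(\<Sum>i<n. M i i) = \<mu> * (\<Sum>i<n. v i ^ 2 * v i ^ 2) + (\<Sum>i<n. A i i * v i ^ 2)"
        unfolding M_def by (simp add: sum.distrib sum_distrib_left power2_eq_square algebra_simps)
      also have "\<dots> \<le> \<mu> * (\<Sum>i<n. (1/\<mu>) * v i ^ 2) + (\<Sum>i<n. 1 * v i ^ 2)"
        using vb bnd mu by (intro add_mono mult_left_mono sum_mono mult_right_mono) (auto simp: abs_le_iff)
      also have "\<dots> = 2" using v1 mu by (simp add: sum_divide_distrib[symmetric])
      finally show ?thesis .
    qed
    moreover have "32 * (1 - p) / (\<mu> * p) \<le> 1/3"
    proof (cases "96 / \<mu> \<ge> 1")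
      case True then have "p = 1" using pdef by simp
      then show ?thesis by simp
    next
      case False then have "p = 96 / \<mu>" using pdef by simp
      then have "\<mu> * p = 96" using mu by simp
      then show ?thesis using p0 by simp
    qed
    ultimately show ?thesis
    proof -
      assume a: "subset_prob n p ?E \<ge> 1 - (\<Sum>T\<in>Pow {..<n}. wt n p T * Z T) / t0"
        and b: "(\<Sum>T\<in>Pow {..<n}. wt n p T * Z T) = p * (1-p) * (\<Sum>i<n. M i i)"
        and c: "(\<Sum>i<n. M i i) \<le> 2" and d: "32 * (1 - p) / (\<mu> * p) \<le> 1/3"
      have "p * (1-p) * (\<Sum>i<n. M i i) \<le> p * (1-p) * 2" using c p0 p1 by (intro mult_left_mono) auto
      then have "(\<Sum>T\<in>Pow {..<n}. wt n p T * Z T) / t0 \<le> (p * (1-p) * 2) / t0" using b t0 by (simp add: divide_right_mono)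
      also have "\<dots> = 32 * (1 - p) / (\<mu> * p)" unfolding t0_def using p0 mu by (simp add: field_simps power2_eq_square)
      finally show ?thesis using a d by linarith
    qed
  qed
qed

theorem mainTheorem5:
  "\<exists>c::real. c > 0 \<and>
     (\<forall>(n::nat) (\<epsilon>::real) (A::nat \<Rightarrow> nat \<Rightarrow> real).
        n \<ge> 1 \<longrightarrow> 0 < \<epsilon> \<longrightarrow> \<epsilon> < 1 \<longrightarrow> psd_mat n A \<longrightarrow>
        (\<forall>i<n. \<forall>j<n. \<bar>A i j\<bar> \<le> 1) \<longrightarrow>
        subset_prob n (min 1 (c / (\<epsilon> * real n)))
          (\<lambda>T. lambda_max n A < \<epsilon> * real n \<or>
               (\<exists>x::nat \<Rightarrow> real. (\<forall>i<n. i \<notin> T \<longrightarrow> x i = 0) \<and>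
                  quad_form n A x > 0 \<and>
                  quad_form n (mat_mul n A A) x / quad_form n A x \<ge> lambda_max n A - \<epsilon> * real n))
        \<ge> 2/3)"
proof (intro exI[of _ 96] conjI allI impI)
  fix n :: nat and \<epsilon> :: real and A
  assume "n \<ge> 1" "0 < \<epsilon>" "\<epsilon> < 1" "psd_mat n A" "\<forall>i<n. \<forall>j<n. \<bar>A i j\<bar> \<le> 1"
  then show "subset_prob n (min 1 (96 / (\<epsilon> * real n)))
          (\<lambda>T. lambda_max n A < \<epsilon> * real n \<or>
               (\<exists>x::nat \<Rightarrow> real. (\<forall>i<n. i \<notin> T \<longrightarrow> x i = 0) \<and>
                  quad_form n A x > 0 \<and>
                  quad_form n (mat_mul n A A) x / quad_form n A x \<ge> lambda_max n A - \<epsilon> * real n))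
        \<ge> 2/3"
    by (intro main_fixed) auto
qed simp

end
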